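(* Let $N\ge 1$, $M>N$, let $k_1<k_2<\dots<k_M$ be real numbers (generic), let $\theta_{01},\dots,\theta_{0M}$ be real constants and set $\theta_m=k_mx+k_m^2y+k_m^3t+\theta_{0m}$. Let $A=(a_{nm})$ be a real $N\times M$ matrix of rank $N$ all of whose nonzero $N\times N$ minors are positive, and let $$\tau(x,y,t)=\sum_{1\le m_1<\dots<m_N\le M} A(m_1,\dots,m_N)\,\exp[\theta(m_1,\dots,m_N)]\prod_{1\le s<r\le N}(k_{m_r}-k_{m_s}),$$ where $A(m_1,\dots,m_N)$ is the minor of $A$ on columns $m_1,\dots,m_N$ and $\theta(m_1,\dots,m_N)=\theta_{m_1}+\dots+\theta_{m_N}$. Let $u=2(\log\tau)_{xx}$. Fix $t$. Then, as $y\to\pm\infty$: (i) The dominant phase combinations of $\tau$ (the exponential terms of $\tau$ that dominate all others) in adjacent regions of the $xy$-plane have $N-1$ phases in common and differ by a single phase; the transition between two such dominant combinations $\theta(i,m_2,\dots,m_N)$ and $\theta(j,m_2,\dots,m_N)$ occurs along the line $L_{ij}:\theta_i=\theta_j$. (ii) Along such a transition line $L_{ij}$, $\tau(x,y,t)\sim C_i e^{\theta(i,m_2,\dots,m_N)}+C_j e^{\theta(j,m_2,\dots,m_N)}$, where the constants $C_i,C_j$ depend on $k_i,k_j,k_{m_2},\dots,k_{m_N}$ and on the minors $A(i,m_2,\dots,m_N)$, $A(j,m_2,\dots,m_N)$; consequently, in a neighborhood of $L_{ij}$, $$u(x,y,t)\sim \tfrac12(k_i-k_j)^2\,\mathrm{sech}^2\big[\tfrac12(\theta_i-\theta_j)\big],$$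 a traveling wave (asymptotic line soliton) with amplitude $|k_i-k_j|$ and direction $k_i+k_j$ (the slope of the normal to $L_{ij}$), which satisfies the dispersion relation $-4\omega l_x+l_x^4+3l_y^2=0$ with $l_x=k_i-k_j$, $l_y=k_i^2-k_j^2$, $\omega=k_i^3-k_j^3$.
   Context: This concerns the KPII equation $(-4u_t+u_{xxx}+6uu_x)_x+3u_{yy}=0$, solutions of which are given by $u=2(\log\tau)_{xx}$ with $\tau$ the Wronskian of $f_n=\sum_{m=1}^M a_{nm}e^{\theta_m}$, $n=1,\dots,N$; the displayed sum is the expansion of this Wronskian. Under the stated positivity assumptions $\tau>0$ everywhere and $u$ is a nonsingular solution. An asymptotic line soliton arising from the single-phase transition $i\to j$ is labeled by the index pair $[i,j]$. *)

theory Defs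
  imports Complex_Main "HOL-Analysis.Derivative" "Jordan_Normal_Form.Determinant" "Jordan_Normal_Form.DL_Rank"
    "Jordan_Normal_Form.DL_Submatrix"
begin

(* Conventions: columns / phases are indexed 0..M-1 (paper: 1..M), rows 0..N-1.
   A :: real mat with A \<in> carrier_mat N M.  k m, th0 m are the parameters k_m, theta_{0m}. *)

definition phase :: "(nat \<Rightarrow> real) \<Rightarrow> (nat \<Rightarrow> real) \<Rightarrow> nat \<Rightarrow> real \<Rightarrow> real \<Rightarrow> real \<Rightarrow> real" where
  "phase k th0 m x y t = k m * x + (k m)^2 * y + (k m)^3 * t + th0 m"

definition phaseS :: "(nat \<Rightarrow> real) \<Rightarrow> (nat \<Rightarrow> real) \<Rightarrow> nat set \<Rightarrow> real \<Rightarrow> real \<Rightarrow> real \<Rightarrow> real" where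
  "phaseS k th0 I x y t = (\<Sum>m\<in>I. phase k th0 m x y t)"

definition idx_sets :: "nat \<Rightarrow> nat \<Rightarrow> nat set set" where
  "idx_sets M N = {I. I \<subseteq> {..<M} \<and> card I = N}"

(* the maximal minor A(m_1,...,m_N): columns m_1<...<m_N, all rows (submatrix keeps order) *)
definition col_minor :: "real mat \<Rightarrow> nat set \<Rightarrow> real" where
  "col_minor A I = det (submatrix A UNIV I)"

definition vandermonde :: "(nat \<Rightarrow> real) \<Rightarrow> nat set \<Rightarrow> real" where
  "vandermonde k I = (\<Prod>p\<in>{(a,b). a \<in> I \<and> b \<in> I \<and> a < b}. k (snd p) - k (fst p))"

definition coeff :: "real mat \<Rightarrow> (nat \<Rightarrow> real) \<Rightarrow> nat set \<Rightarrow> real" where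
  "coeff A k I = col_minor A I * vandermonde k I"

definition tau :: "real mat \<Rightarrow> (nat \<Rightarrow> real) \<Rightarrow> (nat \<Rightarrow> real) \<Rightarrow> real \<Rightarrow> real \<Rightarrow> real \<Rightarrow> real" where
  "tau A k th0 x y t =
     (\<Sum>I\<in>idx_sets (dim_col A) (dim_row A). coeff A k I * exp (phaseS k th0 I x y t))"

definition kp_u :: "real mat \<Rightarrow> (nat \<Rightarrow> real) \<Rightarrow> (nat \<Rightarrow> real) \<Rightarrow> real \<Rightarrow> real \<Rightarrow> real \<Rightarrow> real" where
  "kp_u A k th0 x y t = 2 * deriv (\<lambda>x'. deriv (\<lambda>x''. ln (tau A k th0 x'' y t)) x') x"

definition dominant :: "real mat \<Rightarrow> (nat \<Rightarrow> real) \<Rightarrow> (nat \<Rightarrow> real) \<Rightarrow> real \<Rightarrow> real \<Rightarrow> real \<Rightarrow> nat set set" where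
  "dominant A k th0 x y t =
     {I \<in> idx_sets (dim_col A) (dim_row A). coeff A k I \<noteq> 0 \<and>
        (\<forall>J \<in> idx_sets (dim_col A) (dim_row A). coeff A k J \<noteq> 0 \<longrightarrow>
            phaseS k th0 J x y t \<le> phaseS k th0 I x y t)}"

(* the x-coordinate of the point at height y where theta_i - theta_j = s
   (s = 0: the line L_ij; s ranging over a bounded set: a neighbourhood of L_ij) *)
definition line_x :: "(nat \<Rightarrow> real) \<Rightarrow> (nat \<Rightarrow> real) \<Rightarrow> nat \<Rightarrow> nat \<Rightarrow> real \<Rightarrow> real \<Rightarrow> real \<Rightarrow> real" where
  "line_x k th0 i j s y t =
     (s - ((k i)^2 - (k j)^2) * y - ((k i)^3 - (k j)^3) * t - th0 i + th0 j) / (k i - k j)"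

end

theory Submission
  imports Defs
begin

lemma pick_bij:
  assumes "finite I" shows "bij_betw (pick I) {..<card I} I"
proof -
  have inj: "inj_on (pick I) {..<card I}"
  proof (rule inj_onI)
    fix a b assume a: "a \<in> {..<card I}" and b: "b \<in> {..<card I}" and e: "pick I a = pick I b"
    have 1: "\<not> a < b"
    proof
      assume "a < b" then have "pick I a < pick I b" using pick_mono[where S=I and n=b and m=a] b by simp
      then show False using e by simp
    qed
    have 2: "\<not> b < a"
    proof
      assume "b < a" then have "pick I b < pick I a" using pick_mono[where S=I and n=a and m=b] a by simp
      then show False using e by simp
    qed
    show "a = b" using 1 2 by simp
  qed
  have sub: "pick I ` {..<card I} \<subseteq> I" using pick_in_set by blast
  have sup: "I \<subseteq> pick I ` {..<card I}"
  proof
    fix m assume m: "m \<in> I"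
    have "{a\<in>I. a < m} \<subset> I" using m by auto
    then have "card {a\<in>I. a < m} < card I" using assms psubset_card_mono by blast
    moreover have "pick I (card {a\<in>I. a < m}) = m" using pick_card_in_set[OF m] .
    ultimately show "m \<in> pick I ` {..<card I}" by force
  qed
  show ?thesis unfolding bij_betw_def using inj sub sup by blast
qed
definition pos :: "nat set \<Rightarrow> nat \<Rightarrow> nat" where "pos I m = card {a\<in>I. a < m}"

lemma pos_pick: "j < card I \<Longrightarrow> pos I (pick I j) = j"
  unfolding pos_def using card_pick by auto

lemma pick_pos: "m \<in> I \<Longrightarrow> pick I (pos I m) = m"
  unfolding pos_def using pick_card_in_set by auto

lemma pos_lt: "finite I \<Longrightarrow> m \<in> I \<Longrightarrow> pos I m < card I"
proof -
  assume f: "finite I" and m: "m \<in> I"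
  have "{a\<in>I. a < m} \<subset> I" using m by auto
  then show ?thesis unfolding pos_def using f psubset_card_mono by blast
qed

definition indep :: "'a::field mat \<Rightarrow> nat \<Rightarrow> nat set \<Rightarrow> bool" where
  "indep A N I = (\<forall>c. (\<forall>r<N. (\<Sum>m\<in>I. c m * A $$ (r,m)) = 0) \<longrightarrow> (\<forall>m\<in>I. c m = 0))"

lemma sub_carrier:
  fixes A :: "real mat"
  assumes A: "A \<in> carrier_mat N M" and I: "I \<subseteq> {..<M}" "card I = N"
  shows "submatrix A UNIV I \<in> carrier_mat N N"
proof -
  have "{j. j < M \<and> j \<in> I} = I" using I by auto
  then show ?thesis using A I unfolding carrier_mat_def by (auto simp: dim_submatrix)
qed

lemma sub_mv:
  fixes A :: "real mat"
  assumes A: "A \<in> carrier_mat N M" and I: "I \<subseteq> {..<M}" "card I = N"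
    and v: "v \<in> carrier_vec N" and r: "r < N"
  shows "(submatrix A UNIV I *\<^sub>v v) $ r = (\<Sum>m\<in>I. v $ (pos I m) * A $$ (r, m))"
proof -
  have S: "submatrix A UNIV I \<in> carrier_mat N N" using sub_carrier[OF A I] .
  have fI: "finite I" using I finite_subset by blast
  have eqI: "{j. j < dim_col A \<and> j \<in> I} = I" using I A by auto
  have eqU: "{i. i < dim_row A \<and> i \<in> UNIV} = {..<N}" using A by auto
  have "(submatrix A UNIV I *\<^sub>v v) $ r = (\<Sum>c\<in>{0..<N}. submatrix A UNIV I $$ (r,c) * v $ c)"
    using S v r by (auto simp: scalar_prod_def)
  also have "\<dots> = (\<Sum>c\<in>{..<card I}. v $ c * A $$ (r, pick I c))"
  proof (rule sum.cong)
    show "{0..<N} = {..<card I}" using I by auto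
  next
    fix c assume c: "c \<in> {..<card I}"
    have "submatrix A UNIV I $$ (r,c) = A $$ (pick UNIV r, pick I c)"
      by (rule submatrix_index) (use r c eqI eqU in auto)
    then have "submatrix A UNIV I $$ (r,c) = A $$ (r, pick I c)" by (simp only: pick_UNIV)
    then show "submatrix A UNIV I $$ (r,c) * v $ c = v $ c * A $$ (r, pick I c)"
      by (simp add: mult.commute)
  qed
  also have "\<dots> = (\<Sum>c\<in>{..<card I}. v $ (pos I (pick I c)) * A $$ (r, pick I c))"
    by (rule sum.cong) (auto simp: pos_pick)
  also have "\<dots> = (\<Sum>m\<in>I. v $ (pos I m) * A $$ (r, m))"
    using sum.reindex_bij_betw[OF pick_bij[OF fI], of "\<lambda>m. v $ (pos I m) * A $$ (r, m)"] .
  finally show ?thesis .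
qed

lemma minor_indep:
  fixes A :: "real mat"
  assumes A: "A \<in> carrier_mat N M" and I: "I \<subseteq> {..<M}" "card I = N"
  shows "det (submatrix A UNIV I) \<noteq> 0 \<longleftrightarrow> indep A N I"
proof -
  have S: "submatrix A UNIV I \<in> carrier_mat N N" using sub_carrier[OF A I] .
  have fI: "finite I" using I finite_subset by blast
  show ?thesis
  proof
    assume d: "det (submatrix A UNIV I) \<noteq> 0"
    show "indep A N I" unfolding indep_def
    proof (intro allI impI)
      fix c assume h: "\<forall>r<N. (\<Sum>m\<in>I. c m * A $$ (r,m)) = 0"
      define v where "v = vec N (\<lambda>j. c (pick I j))"
      have v: "v \<in> carrier_vec N" unfolding v_def by simp
      have vp: "v $ (pos I m) = c m" if m: "m \<in> I" for m
      proof -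
        have "pos I m < N" using pos_lt[OF fI m] I by simp
        then have "v $ (pos I m) = c (pick I (pos I m))" unfolding v_def by simp
        then show ?thesis using pick_pos[OF m] by simp
      qed
      have "submatrix A UNIV I *\<^sub>v v = 0\<^sub>v N"
      proof (rule eq_vecI)
        fix r assume "r < dim_vec (0\<^sub>v N :: real vec)"
        then have r: "r < N" by simp
        have "(submatrix A UNIV I *\<^sub>v v) $ r = (\<Sum>m\<in>I. c m * A $$ (r, m))"
          using sub_mv[OF A I v r] vp by simp
        then show "(submatrix A UNIV I *\<^sub>v v) $ r = 0\<^sub>v N $ r" using h r by simp
      qed (use S in simp)
      moreover have "\<not> (\<exists>w. w \<in> carrier_vec N \<and> w \<noteq> 0\<^sub>v N \<and> submatrix A UNIV I *\<^sub>v w = 0\<^sub>v N)"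
        using det_0_iff_vec_prod_zero_field[OF S] d by simp
      ultimately have "v = 0\<^sub>v N" using v by blast
      show "\<forall>m\<in>I. c m = 0"
      proof
        fix m assume m: "m \<in> I"
        have "pos I m < N" using pos_lt[OF fI m] I by simp
        then have "v $ (pos I m) = 0" using \<open>v = 0\<^sub>v N\<close> by simp
        then show "c m = 0" using vp[OF m] by simp
      qed
    qed
  next
    assume ind: "indep A N I"
    show "det (submatrix A UNIV I) \<noteq> 0"
    proof
      assume d0: "det (submatrix A UNIV I) = 0"
      have "\<exists>v. v \<in> carrier_vec N \<and> v \<noteq> 0\<^sub>v N \<and> submatrix A UNIV I *\<^sub>v v = 0\<^sub>v N"
        using det_0_iff_vec_prod_zero_field[OF S] d0 by simp
      then obtain v where v: "v \<in> carrier_vec N" "v \<noteq> 0\<^sub>v N" "submatrix A UNIV I *\<^sub>v v = 0\<^sub>v N"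
        by blast
      have "\<forall>r<N. (\<Sum>m\<in>I. v $ (pos I m) * A $$ (r,m)) = 0"
      proof (intro allI impI)
        fix r assume r: "r < N"
        have "(submatrix A UNIV I *\<^sub>v v) $ r = 0" using v(3) r by simp
        then show "(\<Sum>m\<in>I. v $ (pos I m) * A $$ (r,m)) = 0" using sub_mv[OF A I v(1) r] by simp
      qed
      moreover have "(\<forall>r<N. (\<Sum>m\<in>I. (\<lambda>m. v $ (pos I m)) m * A $$ (r,m)) = 0) \<longrightarrow> (\<forall>m\<in>I. (\<lambda>m. v $ (pos I m)) m = 0)"
        using ind unfolding indep_def by (rule spec)
      ultimately have z: "\<forall>m\<in>I. v $ (pos I m) = 0" by simp
      have "v = 0\<^sub>v N"
      proof (rule eq_vecI)
        fix j assume "j < dim_vec (0\<^sub>v N :: real vec)"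
        then have j: "j < card I" using I by simp
        have "pick I j \<in> I" using pick_in_set j by blast
        then have "v $ (pos I (pick I j)) = 0" using z by blast
        then show "v $ j = 0\<^sub>v N $ j" using j pos_pick I by simp
      qed (use v in simp)
      then show False using v by simp
    qed
  qed
qed

lemma minor_span:
  fixes A :: "real mat"
  assumes A: "A \<in> carrier_mat N M" and I: "I \<subseteq> {..<M}" "card I = N"
    and d: "det (submatrix A UNIV I) \<noteq> 0"
  shows "\<exists>c. \<forall>r<N. (\<Sum>m\<in>I. c m * A $$ (r,m)) = b r"
proof -
  have S: "submatrix A UNIV I \<in> carrier_mat N N" using sub_carrier[OF A I] .
  from det_non_zero_imp_unit[OF S d, of "()"]
  obtain T where T: "T \<in> carrier_mat N N" "submatrix A UNIV I * T = 1\<^sub>m N"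
    unfolding Units_def ring_mat_def by auto
  define v where "v = T *\<^sub>v vec N b"
  have v: "v \<in> carrier_vec N" unfolding v_def using T by simp
  have Sv: "submatrix A UNIV I *\<^sub>v v = vec N b"
    unfolding v_def using assoc_mult_mat_vec[OF S T(1), of "vec N b"] T(2) by simp
  show ?thesis
  proof (intro exI allI impI)
    fix r assume r: "r < N"
    have "(\<Sum>m\<in>I. v $ (pos I m) * A $$ (r,m)) = (submatrix A UNIV I *\<^sub>v v) $ r"
      using sub_mv[OF A I v r] by simp
    also have "\<dots> = b r" using Sv r by simp
    finally show "(\<Sum>m\<in>I. v $ (pos I m) * A $$ (r,m)) = b r" .
  qed
qed


lemma exchange:
  fixes A :: "real mat"
  assumes A: "A \<in> carrier_mat N M"
    and I: "I \<subseteq> {..<M}" "card I = N" and J: "J \<subseteq> {..<M}" "card J = N"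
    and dI: "det (submatrix A UNIV I) \<noteq> 0" and dJ: "det (submatrix A UNIV J) \<noteq> 0"
    and z: "z \<in> I" "z \<notin> J"
  shows "\<exists>y\<in>J - I. det (submatrix A UNIV (insert z (J - {y}))) \<noteq> 0"
proof -
  have fI: "finite I" using I finite_subset by blast
  have fJ: "finite J" using J finite_subset by blast
  obtain c where c: "\<And>r. r < N \<Longrightarrow> (\<Sum>m\<in>J. c m * A $$ (r,m)) = A $$ (r,z)"
    using minor_span[OF A J dJ, of "\<lambda>r. A $$ (r,z)"] by blast
  have indI: "indep A N I" using minor_indep[OF A I] dI by simp
  have indJ: "indep A N J" using minor_indep[OF A J] dJ by simp
  have "\<exists>y\<in>J - I. c y \<noteq> 0"
  proof (rule ccontr)
    assume "\<not> (\<exists>y\<in>J - I. c y \<noteq> 0)"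
    then have c0: "\<And>y. y \<in> J - I \<Longrightarrow> c y = 0" by blast
    define e where "e m = (if m \<in> J then c m else 0)" for m
    define d where "d m = e m - (if m = z then 1 else 0)" for m
    have "\<forall>r<N. (\<Sum>m\<in>I. d m * A $$ (r,m)) = 0"
    proof (intro allI impI)
      fix r assume r: "r < N"
      have "(\<Sum>m\<in>J. c m * A $$ (r,m)) = (\<Sum>m\<in>I \<union> J. e m * A $$ (r,m))"
        by (rule sum.mono_neutral_cong_left) (use fI fJ in \<open>auto simp: e_def\<close>)
      also have "\<dots> = (\<Sum>m\<in>I. e m * A $$ (r,m))"
        by (rule sum.mono_neutral_cong_right) (use fI fJ c0 in \<open>auto simp: e_def\<close>)
      finally have 1: "(\<Sum>m\<in>I. e m * A $$ (r,m)) = A $$ (r,z)" using c[OF r] by simp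
      have "(\<Sum>m\<in>I. d m * A $$ (r,m)) = (\<Sum>m\<in>I. e m * A $$ (r,m) - (if m = z then A $$ (r,m) else 0))"
        by (rule sum.cong) (auto simp: d_def algebra_simps)
      also have "\<dots> = (\<Sum>m\<in>I. e m * A $$ (r,m)) - (\<Sum>m\<in>I. (if m = z then A $$ (r,m) else 0))"
        by (rule sum_subtractf)
      also have "\<dots> = 0" using 1 z fI by simp
      finally show "(\<Sum>m\<in>I. d m * A $$ (r,m)) = 0" .
    qed
    moreover have "(\<forall>r<N. (\<Sum>m\<in>I. d m * A $$ (r,m)) = 0) \<longrightarrow> (\<forall>m\<in>I. d m = 0)"
      using indI unfolding indep_def by (rule spec)
    ultimately have "d z = 0" using z by blast
    then show False using z unfolding d_def e_def by simp
  qed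
  then obtain y where y: "y \<in> J" "y \<notin> I" "c y \<noteq> 0" by blast
  define J' where "J' = insert z (J - {y})"
  have J'sub: "J' \<subseteq> {..<M}" using I J z y unfolding J'_def by blast
  have "N > 0" using fJ y J card_gt_0_iff by auto
  then have J'card: "card J' = N" unfolding J'_def using fJ y z J by (simp add: card_Diff_singleton)
  have "indep A N J'"
    unfolding indep_def
  proof (intro allI impI)
    fix f assume h: "\<forall>r<N. (\<Sum>m\<in>J'. f m * A $$ (r,m)) = 0"
    define g where "g m = f z * c m + (if m = y then 0 else f m)" for m
    have "\<forall>r<N. (\<Sum>m\<in>J. g m * A $$ (r,m)) = 0"
    proof (intro allI impI)
      fix r assume r: "r < N"
      have "(\<Sum>m\<in>J. g m * A $$ (r,m)) = (\<Sum>m\<in>J. f z * (c m * A $$ (r,m)) + (if m = y then 0 else f m * A $$ (r,m)))"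
        by (rule sum.cong) (auto simp: g_def algebra_simps)
      also have "\<dots> = f z * (\<Sum>m\<in>J. c m * A $$ (r,m)) + (\<Sum>m\<in>J. (if m = y then 0 else f m * A $$ (r,m)))"
        by (simp add: sum.distrib sum_distrib_left)
      also have "(\<Sum>m\<in>J. (if m = y then 0 else f m * A $$ (r,m))) = (\<Sum>m\<in>J - {y}. f m * A $$ (r,m))"
        by (rule sum.mono_neutral_cong_right) (use fJ y in auto)
      also have "f z * (\<Sum>m\<in>J. c m * A $$ (r,m)) + (\<Sum>m\<in>J - {y}. f m * A $$ (r,m)) = (\<Sum>m\<in>J'. f m * A $$ (r,m))"
        unfolding J'_def using c[OF r] fJ z by simp
      also have "\<dots> = 0" using h r by blast
      finally show "(\<Sum>m\<in>J. g m * A $$ (r,m)) = 0" .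
    qed
    moreover have "(\<forall>r<N. (\<Sum>m\<in>J. g m * A $$ (r,m)) = 0) \<longrightarrow> (\<forall>m\<in>J. g m = 0)"
      using indJ unfolding indep_def by (rule spec)
    ultimately have g0: "\<forall>m\<in>J. g m = 0" by blast
    then have "f z * c y = 0" using y unfolding g_def by force
    then have fz: "f z = 0" using y by simp
    show "\<forall>m\<in>J'. f m = 0"
    proof
      fix m assume m: "m \<in> J'"
      show "f m = 0"
      proof (cases "m = z")
        case True then show ?thesis using fz by simp
      next
        case False
        then have "m \<in> J" "m \<noteq> y" using m unfolding J'_def by auto
        then show ?thesis using g0 fz unfolding g_def by force
      qed
    qed
  qed
  then have "det (submatrix A UNIV J') \<noteq> 0" using minor_indep[OF A J'sub J'card] by simp
  then show ?thesis using y unfolding J'_def by blast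
qed

lemma (in vec_space) rank_indep:
  assumes A: "A \<in> carrier_mat n nc" and rk: "rank A = n"
  shows "\<exists>J. J \<subseteq> {..<nc} \<and> card J = n \<and> indep A n J"
proof -
  obtain S where S: "maximal S (\<lambda>T. T \<subseteq> set (cols A) \<and> lin_indpt T)"
    using maximal_exists[of "(\<lambda>T. T \<subseteq> set (cols A) \<and> lin_indpt T)" "card (set (cols A))" "{}"]
    by (meson List.finite_set card_mono empty_iff empty_subsetI finite_lin_indpt2 rev_finite_subset)
  have cS: "card S = n" using rank_card_indpt[OF A S] rk by simp
  have Ssub: "S \<subseteq> set (cols A)" and Sli: "lin_indpt S" using S unfolding maximal_def by auto
  have fS: "finite S" using Ssub finite_subset by blast
  have Scar: "S \<subseteq> carrier_vec n" using Ssub A unfolding cols_def by auto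
  define idx where "idx v = (SOME m. m < nc \<and> col A m = v)" for v
  have idx: "idx v < nc \<and> col A (idx v) = v" if v: "v \<in> S" for v
  proof -
    have "v \<in> col A ` {0..<nc}" using Ssub v A unfolding cols_def by auto
    then have "\<exists>m. m < nc \<and> col A m = v" by force
    then show ?thesis unfolding idx_def by (rule someI_ex)
  qed
  have inj: "inj_on idx S" by (rule inj_onI) (metis idx)
  define J where "J = idx ` S"
  have Jsub: "J \<subseteq> {..<nc}" unfolding J_def using idx by auto
  have cJ: "card J = n" unfolding J_def using card_image[OF inj] cS by simp
  have "indep A n J" unfolding indep_def
  proof (intro allI impI ballI)
    fix c m0 assume h: "\<forall>r<n. (\<Sum>m\<in>J. c m * A $$ (r,m)) = 0" and m0: "m0 \<in> J"
    show "c m0 = 0"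
    proof (rule ccontr)
      assume cm0: "c m0 \<noteq> 0"
      obtain v0 where v0: "v0 \<in> S" "m0 = idx v0" using m0 unfolding J_def by blast
      define a where "a v = c (idx v)" for v
      have lc: "lincomb a S = 0\<^sub>v n"
      proof (rule eq_vecI)
        show "dim_vec (lincomb a S) = dim_vec (0\<^sub>v n :: 'a vec)"
          using lincomb_closed[OF Scar, of a] by simp
        fix r assume "r < dim_vec (0\<^sub>v n :: 'a vec)"
        then have r: "r < n" by simp
        have "lincomb a S $ r = (\<Sum>v\<in>S. a v * v $ r)" using lincomb_index[OF r Scar] .
        also have "\<dots> = (\<Sum>v\<in>S. c (idx v) * A $$ (r, idx v))"
        proof (rule sum.cong)
          fix v assume v: "v \<in> S"
          have e: "col A (idx v) = v" using idx[OF v] by blast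
          have "v $ r = col A (idx v) $ r" by (simp only: e)
          also have "\<dots> = A $$ (r, idx v)"
            by (rule index_col) (use idx[OF v] r A in auto)
          finally show "a v * v $ r = c (idx v) * A $$ (r, idx v)" unfolding a_def by simp
        qed simp
        also have "\<dots> = (\<Sum>m\<in>J. c m * A $$ (r,m))" unfolding J_def
          using sum.reindex[OF inj, of "\<lambda>m. c m * A $$ (r,m)"] by simp
        also have "\<dots> = 0" using h r by blast
        finally show "lincomb a S $ r = 0\<^sub>v n $ r" using r by simp
      qed
      have "lin_dep S"
        unfolding lin_dep_def
        apply (rule exI[of _ S], rule exI[of _ a], rule exI[of _ v0])
        using fS lc v0 cm0 unfolding a_def by (auto simp: module_vec_simps class_ring_simps)
      then show False using Sli by simp
    qed
  qed
  then show ?thesis using Jsub cJ by blast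
qed

lemma rank_minor:
  fixes A :: "real mat"
  assumes A: "A \<in> carrier_mat N M" and rk: "vec_space.rank N A = N"
  shows "\<exists>J. J \<subseteq> {..<M} \<and> card J = N \<and> det (submatrix A UNIV J) \<noteq> 0"
proof -
  obtain J where J: "J \<subseteq> {..<M}" "card J = N" "indep A N J"
    using vec_space.rank_indep[OF A rk] by blast
  then show ?thesis using minor_indep[OF A J(1,2)] by blast
qed

definition gismax :: "nat set set \<Rightarrow> (nat \<Rightarrow> real) \<Rightarrow> nat set \<Rightarrow> bool" where
  "gismax Bs w X \<longleftrightarrow> X \<in> Bs \<and> (\<forall>Z\<in>Bs. sum w Z \<le> sum w X)"

locale exfam =
  fixes Bs :: "nat set set" and U :: "nat set" and w :: "nat \<Rightarrow> real"
  assumes exch: "\<And>X Y z. X \<in> Bs \<Longrightarrow> Y \<in> Bs \<Longrightarrow> z \<in> X - Y \<Longrightarrow> \<exists>y\<in>Y - X. insert z (Y - {y}) \<in> Bs"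
    and fin: "\<And>X. X \<in> Bs \<Longrightarrow> finite X"
    and subU: "\<And>X. X \<in> Bs \<Longrightarrow> X \<subseteq> U"
    and ties: "\<And>a b c d. a \<in> U \<Longrightarrow> b \<in> U \<Longrightarrow> c \<in> U \<Longrightarrow> d \<in> U \<Longrightarrow> a \<noteq> b \<Longrightarrow> c \<noteq> d
                 \<Longrightarrow> w a = w b \<Longrightarrow> w c = w d \<Longrightarrow> {a,b} = {c,d}"
begin

abbreviation ismax :: "nat set \<Rightarrow> bool" where
  "ismax X \<equiv> gismax Bs w X"

lemma sum_swap:
  assumes "finite Y" "y \<in> Y" "z \<notin> Y"
  shows "sum w (insert z (Y - {y})) = sum w Y - w y + w z"
proof -
  have "sum w (insert z (Y - {y})) = w z + sum w (Y - {y})" using assms by simp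
  also have "sum w (Y - {y}) = sum w Y - w y" using assms by (simp add: sum_diff1)
  finally show ?thesis by simp
qed

lemma stepA:
  assumes I: "ismax I" and J: "ismax J" and z: "z \<in> I - J"
    and zmax: "\<And>d. d \<in> (I - J) \<union> (J - I) \<Longrightarrow> w d \<le> w z"
  shows "\<exists>y\<in>J - I. w y = w z \<and> ismax (insert z (J - {y}))"
proof -
  have IB: "I \<in> Bs" and JB: "J \<in> Bs" using I J unfolding gismax_def by auto
  obtain y where y: "y \<in> J - I" and J': "insert z (J - {y}) \<in> Bs" using exch[OF IB JB z] by blast
  have s: "sum w (insert z (J - {y})) = sum w J - w y + w z"
    using sum_swap[OF fin[OF JB]] y z by simp
  have "sum w (insert z (J - {y})) \<le> sum w J" using J J' unfolding gismax_def by blast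
  then have 1: "w z \<le> w y" using s by simp
  have 2: "w y \<le> w z" using zmax y by blast
  have eq: "w y = w z" using 1 2 by simp
  have "ismax (insert z (J - {y}))" unfolding gismax_def using J' J s eq unfolding gismax_def by simp
  then show ?thesis using y eq by blast
qed

lemma argmax:
  assumes "finite D" "D \<noteq> {}"
  obtains z where "z \<in> D" "\<And>d. d \<in> D \<Longrightarrow> w d \<le> w z"
proof -
  have "Max (w ` D) \<in> w ` D" using assms by simp
  then obtain z where z: "z \<in> D" "w z = Max (w ` D)" by auto
  have "\<And>d. d \<in> D \<Longrightarrow> w d \<le> w z" using z assms by simp
  then show ?thesis using that z by blast
qed

lemma stepC:
  assumes X: "ismax X" and Y: "ismax Y" and yz: "y \<noteq> z" "y \<in> U" "z \<in> U" "w y = w z"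
    and ny: "y \<notin> (X - Y) \<union> (Y - X)" and nz: "z \<notin> (X - Y) \<union> (Y - X)"
  shows "X = Y"
proof (rule ccontr)
  assume ne: "X \<noteq> Y"
  have XB: "X \<in> Bs" and YB: "Y \<in> Bs" using X Y unfolding gismax_def by auto
  let ?D = "(X - Y) \<union> (Y - X)"
  have fD: "finite ?D" using fin[OF XB] fin[OF YB] by simp
  have neD: "?D \<noteq> {}" using ne by blast
  obtain z' where z': "z' \<in> ?D" and zm: "\<And>d. d \<in> ?D \<Longrightarrow> w d \<le> w z'"
    using argmax[OF fD neD] by blast
  have "\<exists>y'. y' \<in> ?D \<and> y' \<noteq> z' \<and> w y' = w z'"
  proof (cases "z' \<in> X - Y")
    case True
    obtain y' where "y' \<in> Y - X" "w y' = w z'" using stepA[OF X Y True zm] by blast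
    then show ?thesis using True by blast
  next
    case False
    then have z'': "z' \<in> Y - X" using z' by blast
    have zm': "\<And>d. d \<in> (Y - X) \<union> (X - Y) \<Longrightarrow> w d \<le> w z'" using zm by blast
    obtain y' where "y' \<in> X - Y" "w y' = w z'" using stepA[OF Y X z'' zm'] by blast
    then show ?thesis using z'' by blast
  qed
  then obtain y' where y': "y' \<in> ?D" "y' \<noteq> z'" "w y' = w z'" by blast
  have "y' \<in> U" "z' \<in> U" using y'(1) z' subU[OF XB] subU[OF YB] by blast+
  then have "{y', z'} = {y, z}" using ties[of y' z' y z] y' yz by simp
  then have "z' \<in> {y, z}" by blast
  then show False using z' ny nz by blast
qed

lemma two_max:
  assumes I: "ismax I" and J: "ismax J" and ne: "I \<noteq> J"
  shows "\<exists>y z. y \<in> J \<and> z \<notin> J \<and> y \<noteq> z \<and> w y = w z \<and> I = insert z (J - {y})"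
proof -
  have IB: "I \<in> Bs" and JB: "J \<in> Bs" using I J unfolding gismax_def by auto
  let ?D = "(I - J) \<union> (J - I)"
  have fD: "finite ?D" using fin[OF IB] fin[OF JB] by simp
  have neD: "?D \<noteq> {}" using ne by blast
  obtain z where z: "z \<in> ?D" and zm: "\<And>d. d \<in> ?D \<Longrightarrow> w d \<le> w z"
    using argmax[OF fD neD] by blast
  show ?thesis
  proof (cases "z \<in> I - J")
    case True
    obtain y where y: "y \<in> J - I" "w y = w z" and J': "ismax (insert z (J - {y}))"
      using stepA[OF I J True zm] by blast
    have "y \<noteq> z" using y True by blast
    have "y \<in> U" "z \<in> U" using y True subU[OF IB] subU[OF JB] by blast+
    have "I = insert z (J - {y})"
      by (rule stepC[OF I J' \<open>y \<noteq> z\<close> \<open>y \<in> U\<close> \<open>z \<in> U\<close> y(2)]) (use y True in auto)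
    then show ?thesis using y True \<open>y \<noteq> z\<close> by blast
  next
    case False
    then have z'': "z \<in> J - I" using z by blast
    have zm': "\<And>d. d \<in> (J - I) \<union> (I - J) \<Longrightarrow> w d \<le> w z" using zm by blast
    obtain y where y: "y \<in> I - J" "w y = w z" and I': "ismax (insert z (I - {y}))"
      using stepA[OF J I z'' zm'] by blast
    have "y \<noteq> z" using y z'' by blast
    have "y \<in> U" "z \<in> U" using y z'' subU[OF IB] subU[OF JB] by blast+
    have e: "insert z (I - {y}) = J"
      by (rule stepC[OF I' J \<open>y \<noteq> z\<close> \<open>y \<in> U\<close> \<open>z \<in> U\<close> y(2)]) (use y z'' in auto)
    have "I = insert y (J - {z})" using e[symmetric] y z'' by auto
    moreover have "w z = w y" using y by simp
    ultimately show ?thesis using y z'' \<open>y \<noteq> z\<close> by blast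
  qed
qed

lemma third_max:
  assumes I: "ismax I" and J: "ismax J" and ne: "I \<noteq> J" and L: "ismax L"
  shows "L = I \<or> L = J"
proof (rule ccontr)
  assume nL: "\<not> (L = I \<or> L = J)"
  have IB: "I \<in> Bs" and JB: "J \<in> Bs" and LB: "L \<in> Bs" using I J L unfolding gismax_def by auto
  obtain y z where yz: "y \<in> J" "z \<notin> J" "y \<noteq> z" "w y = w z" "I = insert z (J - {y})"
    using two_max[OF I J ne] by blast
  obtain y' z' where yz': "y' \<in> J" "z' \<notin> J" "y' \<noteq> z'" "w y' = w z'" "L = insert z' (J - {y'})"
    using two_max[OF L J] nL by blast
  have U: "y \<in> U" "z \<in> U" "y' \<in> U" "z' \<in> U" using yz yz' subU[OF IB] subU[OF JB] subU[OF LB] by blast+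
  have "{y, z} = {y', z'}" using ties[OF U] yz yz' by simp
  then have "y = y' \<and> z = z'" using yz yz' by (metis doubleton_eq_iff)
  then show False using nL yz yz' by simp
qed

end

locale kpctx =
  fixes N M :: nat and k th0 :: "nat \<Rightarrow> real" and A :: "real mat" and t :: real
  assumes N1: "N \<ge> 1" and MN: "M > N"
    and k_incr: "\<And>a b. a < b \<Longrightarrow> b < M \<Longrightarrow> k a < k b"
    and k_generic: "\<And>a b c d. a < M \<Longrightarrow> b < M \<Longrightarrow> c < M \<Longrightarrow> d < M \<Longrightarrow> a < b \<Longrightarrow> c < d
                      \<Longrightarrow> (a, b) \<noteq> (c, d) \<Longrightarrow> k a + k b \<noteq> k c + k d"
    and A_dim: "A \<in> carrier_mat N M"
    and A_rank: "vec_space.rank N A = N"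
    and A_pos: "\<And>I. I \<in> idx_sets M N \<Longrightarrow> col_minor A I \<noteq> 0 \<Longrightarrow> col_minor A I > 0"
begin

definition Bs :: "nat set set" where "Bs = {I \<in> idx_sets M N. col_minor A I \<noteq> 0}"

lemma dims: "dim_col A = M" "dim_row A = N" using A_dim by auto

lemma k_inj: "a < M \<Longrightarrow> b < M \<Longrightarrow> k a = k b \<Longrightarrow> a = b"
  using k_incr by (metis less_irrefl nat_neq_iff)

lemma k_ne: "a < M \<Longrightarrow> b < M \<Longrightarrow> a \<noteq> b \<Longrightarrow> k a \<noteq> k b"
  using k_inj by blast

lemma fin_S: "finite (idx_sets M N)"
proof -
  have "idx_sets M N \<subseteq> Pow {..<M}" unfolding idx_sets_def by auto
  then show ?thesis by (rule finite_subset) simp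
qed

lemma fin_Bs: "finite Bs" unfolding Bs_def using fin_S by simp

lemma vand_pos: assumes "I \<subseteq> {..<M}" shows "vandermonde k I > 0"
  unfolding vandermonde_def
proof (rule prod_pos)
  fix p assume "p \<in> {(a, b). a \<in> I \<and> b \<in> I \<and> a < b}"
  then obtain a b where "p = (a,b)" "a \<in> I" "b \<in> I" "a < b" by blast
  then show "0 < k (snd p) - k (fst p)" using k_incr[of a b] assms by auto
qed

lemma coeff_nonneg: assumes "I \<in> idx_sets M N" shows "coeff A k I \<ge> 0"
proof -
  have "I \<subseteq> {..<M}" using assms unfolding idx_sets_def by blast
  then have v: "vandermonde k I > 0" by (rule vand_pos)
  have "col_minor A I \<ge> 0" using A_pos[OF assms] by force
  then show ?thesis unfolding coeff_def using v by simp
qed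

lemma coeff_ne_iff: assumes "I \<in> idx_sets M N" shows "coeff A k I \<noteq> 0 \<longleftrightarrow> I \<in> Bs"
proof -
  have "I \<subseteq> {..<M}" using assms unfolding idx_sets_def by blast
  then have v: "vandermonde k I > 0" by (rule vand_pos)
  then show ?thesis unfolding coeff_def Bs_def using assms by simp
qed

lemma coeff_pos: assumes "I \<in> Bs" shows "coeff A k I > 0"
proof -
  have "I \<in> idx_sets M N" using assms unfolding Bs_def by simp
  then show ?thesis using coeff_nonneg coeff_ne_iff assms by force
qed

lemma Bs_exch: "X \<in> Bs \<Longrightarrow> Y \<in> Bs \<Longrightarrow> z \<in> X - Y \<Longrightarrow> \<exists>y\<in>Y - X. insert z (Y - {y}) \<in> Bs"
proof -
  assume X: "X \<in> Bs" and Y: "Y \<in> Bs" and z: "z \<in> X - Y"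
  have Xs: "X \<subseteq> {..<M}" "card X = N" "det (submatrix A UNIV X) \<noteq> 0"
    using X unfolding Bs_def idx_sets_def col_minor_def by auto
  have Ys: "Y \<subseteq> {..<M}" "card Y = N" "det (submatrix A UNIV Y) \<noteq> 0"
    using Y unfolding Bs_def idx_sets_def col_minor_def by auto
  obtain y where y: "y \<in> Y - X" "det (submatrix A UNIV (insert z (Y - {y}))) \<noteq> 0"
    using exchange[OF A_dim Xs(1,2) Ys(1,2) Xs(3) Ys(3)] z by blast
  have fY: "finite Y" using Ys finite_subset by blast
  have "N > 0" using N1 by simp
  have "card (insert z (Y - {y})) = N" using fY y z Ys \<open>N > 0\<close> by (simp add: card_Diff_singleton)
  moreover have "insert z (Y - {y}) \<subseteq> {..<M}" using Xs Ys z by blast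
  ultimately have "insert z (Y - {y}) \<in> Bs" using y unfolding Bs_def idx_sets_def col_minor_def by simp
  then show ?thesis using y by blast
qed

lemma Bs_sub: "X \<in> Bs \<Longrightarrow> X \<subseteq> {..<M}" unfolding Bs_def idx_sets_def by simp

lemma Bs_fin: "X \<in> Bs \<Longrightarrow> finite X" using Bs_sub finite_subset by blast

lemma Bs_ne: "Bs \<noteq> {}"
proof -
  obtain J where "J \<subseteq> {..<M}" "card J = N" "det (submatrix A UNIV J) \<noteq> 0"
    using rank_minor[OF A_dim A_rank] by blast
  then have "J \<in> Bs" unfolding Bs_def idx_sets_def col_minor_def by simp
  then show ?thesis by blast
qed

definition tiefree :: "(nat \<Rightarrow> real) \<Rightarrow> bool" where
  "tiefree w \<longleftrightarrow> (\<forall>a b c d. a \<in> {..<M} \<longrightarrow> b \<in> {..<M} \<longrightarrow> c \<in> {..<M} \<longrightarrow> d \<in> {..<M} \<longrightarrow> a \<noteq> b \<longrightarrow> c \<noteq> d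
                 \<longrightarrow> w a = w b \<longrightarrow> w c = w d \<longrightarrow> {a,b} = {c,d})"

lemma exfam_Bs: assumes tf: "tiefree w" shows "exfam Bs {..<M} w"
proof (rule exfam.intro)
  fix X Y z assume "X \<in> Bs" "Y \<in> Bs" "z \<in> X - Y"
  then show "\<exists>y\<in>Y - X. insert z (Y - {y}) \<in> Bs" by (rule Bs_exch)
next
  fix X assume "X \<in> Bs" then show "finite X" by (rule Bs_fin)
next
  fix X assume "X \<in> Bs" then show "X \<subseteq> {..<M}" by (rule Bs_sub)
next
  fix a b c d assume h: "a \<in> {..<M}" "b \<in> {..<M}" "c \<in> {..<M}" "d \<in> {..<M}" "a \<noteq> b" "c \<noteq> d" "w a = w b" "w c = w d"
  show "{a, b} = {c, d}" by (rule tf[unfolded tiefree_def, rule_format]) (rule h)+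
qed

lemma exists_max: "\<exists>I. gismax Bs w I"
proof -
  have "Max (sum w ` Bs) \<in> sum w ` Bs" using fin_Bs Bs_ne by simp
  then obtain I where I: "I \<in> Bs" "sum w I = Max (sum w ` Bs)" by auto
  have "\<forall>Z\<in>Bs. sum w Z \<le> sum w I" using I fin_Bs by simp
  then show ?thesis unfolding gismax_def using I by blast
qed

lemma dominant_eq: "dominant A k th0 x y t = {I. gismax Bs (\<lambda>m. phase k th0 m x y t) I}"
proof (rule Set.set_eqI)
  fix I
  have BS: "Bs \<subseteq> idx_sets M N" unfolding Bs_def by blast
  have 1: "(\<forall>J\<in>idx_sets M N. coeff A k J \<noteq> 0 \<longrightarrow> P J) \<longleftrightarrow> (\<forall>J\<in>Bs. P J)" for P
    using coeff_ne_iff BS by blast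
  have 2: "(I \<in> idx_sets M N \<and> coeff A k I \<noteq> 0) \<longleftrightarrow> I \<in> Bs"
    using coeff_ne_iff BS by blast
  have "I \<in> dominant A k th0 x y t \<longleftrightarrow> (I \<in> idx_sets M N \<and> coeff A k I \<noteq> 0) \<and>
     (\<forall>J\<in>idx_sets M N. coeff A k J \<noteq> 0 \<longrightarrow> phaseS k th0 J x y t \<le> phaseS k th0 I x y t)"
    unfolding dominant_def dims by simp
  also have "\<dots> \<longleftrightarrow> I \<in> Bs \<and> (\<forall>J\<in>Bs. phaseS k th0 J x y t \<le> phaseS k th0 I x y t)"
    using 1[of "\<lambda>J. phaseS k th0 J x y t \<le> phaseS k th0 I x y t"] 2 by simp
  also have "\<dots> \<longleftrightarrow> gismax Bs (\<lambda>m. phase k th0 m x y t) I"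
    unfolding gismax_def phaseS_def by simp
  finally show "I \<in> dominant A k th0 x y t \<longleftrightarrow> I \<in> {I. gismax Bs (\<lambda>m. phase k th0 m x y t) I}" by simp
qed

lemma part1_at:
  assumes tf: "tiefree (\<lambda>m. phase k th0 m x y t)"
  shows "card (dominant A k th0 x y t) = 1 \<or>
          (\<exists>K i j. i \<noteq> j \<and> i \<notin> K \<and> j \<notin> K \<and>
             dominant A k th0 x y t = {insert i K, insert j K} \<and>
             phase k th0 i x y t = phase k th0 j x y t)"
proof -
  let ?w = "\<lambda>m. phase k th0 m x y t"
  interpret exfam Bs "{..<M}" ?w using exfam_Bs[OF tf] .
  obtain I where I: "ismax I" using exists_max by blast
  show ?thesis
  proof (cases "\<forall>J. ismax J \<longrightarrow> J = I")
    case True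
    then have "dominant A k th0 x y t = {I}" unfolding dominant_eq using I by blast
    then show ?thesis by simp
  next
    case False
    then obtain J where J: "ismax J" "J \<noteq> I" by blast
    obtain y' z where yz: "y' \<in> J" "z \<notin> J" "y' \<noteq> z" "?w y' = ?w z" "I = insert z (J - {y'})"
      using two_max[OF I J(1)] J(2) by metis
    have D: "dominant A k th0 x y t = {I, J}"
      unfolding dominant_eq using third_max[OF I J(1)] J I by blast
    have "J = insert y' (J - {y'})" using yz by blast
    then have "dominant A k th0 x y t = {insert z (J - {y'}), insert y' (J - {y'})}" using D yz by simp
    moreover have "z \<noteq> y'" "z \<notin> J - {y'}" "y' \<notin> J - {y'}" using yz by auto
    ultimately show ?thesis using yz(4) by metis
  qed
qed


definition Cc :: "nat \<Rightarrow> real" where "Cc m = k m ^ 3 * t + th0 m"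
definition Dp :: "nat \<Rightarrow> nat \<Rightarrow> real" where "Dp a b = (Cc a - Cc b) / (k a - k b)"
definition vq :: "nat \<times> nat \<times> nat \<times> nat \<Rightarrow> real" where
  "vq q = (case q of (a,b,c,d) \<Rightarrow> (Dp a b - Dp c d) / (k c + k d - k a - k b))"

lemma phase_diff:
  assumes "k a \<noteq> k b"
  shows "phase k th0 a x y t - phase k th0 b x y t = (k a - k b) * (x + (k a + k b) * y + Dp a b)"
proof -
  have "k a - k b \<noteq> 0" using assms by simp
  then show ?thesis unfolding phase_def Dp_def Cc_def
    by (simp add: field_simps power2_eq_square power3_eq_cube)
qed

lemma tie_line:
  assumes "k a \<noteq> k b" "phase k th0 a x y t = phase k th0 b x y t"
  shows "x = - (k a + k b) * y - Dp a b"
proof -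
  have "(k a - k b) * (x + (k a + k b) * y + Dp a b) = 0" using phase_diff[OF assms(1), of x y] assms(2) by simp
  then have "x + (k a + k b) * y + Dp a b = 0" using assms(1) by simp
  then show ?thesis by (simp add: algebra_simps)
qed

lemma two_ties:
  assumes "a < M" "b < M" "c < M" "d < M" "a < b" "c < d" "(a,b) \<noteq> (c,d)"
    and "phase k th0 a x y t = phase k th0 b x y t" "phase k th0 c x y t = phase k th0 d x y t"
  shows "y = vq (a,b,c,d)"
proof -
  have kab: "k a \<noteq> k b" and kcd: "k c \<noteq> k d" using k_incr assms by (metis less_irrefl)+
  have g: "k c + k d - k a - k b \<noteq> 0" using k_generic[OF assms(1-7)] by simp
  have 1: "x = - (k a + k b) * y - Dp a b" using tie_line[OF kab assms(8)] .
  have 2: "x = - (k c + k d) * y - Dp c d" using tie_line[OF kcd assms(9)] .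
  have "(k c + k d - k a - k b) * y = Dp a b - Dp c d" using 1 2 by (simp add: algebra_simps)
  then show ?thesis unfolding vq_def using g by (simp add: field_simps)
qed

lemma ev_tiefree:
  assumes F: "filterlim (\<lambda>y. \<sigma> * y) at_top F"
  shows "\<forall>\<^sub>F y in F. \<forall>x. tiefree (\<lambda>m. phase k th0 m x y t)"
proof -
  define Q where "Q = {q :: nat \<times> nat \<times> nat \<times> nat. case q of (a,b,c,d) \<Rightarrow>
      a < M \<and> b < M \<and> c < M \<and> d < M \<and> a < b \<and> c < d \<and> (a,b) \<noteq> (c,d)}"
  have "Q \<subseteq> {..<M} \<times> {..<M} \<times> {..<M} \<times> {..<M}" unfolding Q_def by auto
  then have fQ: "finite Q" by (rule finite_subset) simp
  have ev1: "\<forall>\<^sub>F y in F. y \<noteq> v" for v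
  proof -
    have "\<forall>\<^sub>F y in F. \<sigma> * v < \<sigma> * y" using F unfolding filterlim_at_top_dense by blast
    then show ?thesis by eventually_elim auto
  qed
  have "\<forall>\<^sub>F y in F. \<forall>q\<in>Q. y \<noteq> vq q"
    using fQ by (rule eventually_ball_finite) (use ev1 in blast)
  then show ?thesis
  proof eventually_elim
    case (elim y)
    show ?case
    proof
      fix x
      show "tiefree (\<lambda>m. phase k th0 m x y t)" unfolding tiefree_def
      proof (intro allI impI)
        fix a b c d
        assume h: "a \<in> {..<M}" "b \<in> {..<M}" "c \<in> {..<M}" "d \<in> {..<M}" "a \<noteq> b" "c \<noteq> d"
          "phase k th0 a x y t = phase k th0 b x y t" "phase k th0 c x y t = phase k th0 d x y t"
        define a' where "a' = min a b"
        define b' where "b' = max a b"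
        define c' where "c' = min c d"
        define d' where "d' = max c d"
        have ab: "{a,b} = {a',b'}" unfolding a'_def b'_def by (auto simp: min_def max_def)
        have cd: "{c,d} = {c',d'}" unfolding c'_def d'_def by (auto simp: min_def max_def)
        have lt: "a' < b'" "c' < d'" unfolding a'_def b'_def c'_def d'_def using h by auto
        have ltM: "a' < M" "b' < M" "c' < M" "d' < M" unfolding a'_def b'_def c'_def d'_def using h by auto
        have t1: "phase k th0 a' x y t = phase k th0 b' x y t" unfolding a'_def b'_def using h(7)
          by (auto simp: min_def max_def)
        have t2: "phase k th0 c' x y t = phase k th0 d' x y t" unfolding c'_def d'_def using h(8)
          by (auto simp: min_def max_def)
        show "{a, b} = {c, d}"
        proof (cases "(a',b') = (c',d')")
          case True then show ?thesis using ab cd by simp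
        next
          case False
          have "(a',b',c',d') \<in> Q" unfolding Q_def using lt ltM False by simp
          then have "y \<noteq> vq (a',b',c',d')" using elim by blast
          moreover have "y = vq (a',b',c',d')" using two_ties[OF ltM lt False t1 t2] .
          ultimately show ?thesis by simp
        qed
      qed
    qed
  qed
qed

end

context kpctx begin

definition tn :: "nat \<Rightarrow> real \<Rightarrow> real \<Rightarrow> real" where
  "tn n x y = (\<Sum>L\<in>idx_sets M N. coeff A k L * (sum k L) ^ n * exp (phaseS k th0 L x y t))"

lemma phaseS_lin: "phaseS k th0 L x y t = sum k L * x + (\<Sum>m\<in>L. k m ^ 2 * y + k m ^ 3 * t + th0 m)"
  unfolding phaseS_def phase_def by (simp add: sum.distrib sum_distrib_right add.assoc)

lemma exp_phaseS_deriv: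
  "((\<lambda>x. exp (phaseS k th0 L x y t)) has_real_derivative (sum k L * exp (phaseS k th0 L x y t))) (at x)"
proof -
  let ?R = "\<Sum>m\<in>L. k m ^ 2 * y + k m ^ 3 * t + th0 m"
  have e: "(\<lambda>x. exp (phaseS k th0 L x y t)) = (\<lambda>x. exp (sum k L * x + ?R))"
    by (rule ext) (simp add: phaseS_lin)
  have "((\<lambda>x. exp (sum k L * x + ?R)) has_real_derivative (exp (sum k L * x + ?R) * sum k L)) (at x)"
    by (auto intro!: derivative_eq_intros)
  then show ?thesis unfolding e by (simp add: phaseS_lin mult.commute)
qed

lemma tn_deriv: "((\<lambda>x. tn n x y) has_real_derivative tn (Suc n) x y) (at x)"
proof -
  have "((\<lambda>x. \<Sum>L\<in>idx_sets M N. coeff A k L * (sum k L) ^ n * exp (phaseS k th0 L x y t)) has_real_derivative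
        (\<Sum>L\<in>idx_sets M N. coeff A k L * (sum k L) ^ n * (sum k L * exp (phaseS k th0 L x y t)))) (at x)"
    by (intro DERIV_sum DERIV_cmult exp_phaseS_deriv)
  then show ?thesis unfolding tn_def by (simp add: algebra_simps)
qed

lemma tau_tn: "tau A k th0 x y t = tn 0 x y"
  unfolding tau_def tn_def dims by simp

lemma tn0_pos: "tn 0 x y > 0"
proof -
  obtain L where L: "L \<in> Bs" using Bs_ne by blast
  have LS: "L \<in> idx_sets M N" using L unfolding Bs_def by simp
  show ?thesis unfolding tn_def
  proof (rule sum_pos2[OF fin_S LS])
    show "0 < coeff A k L * sum k L ^ 0 * exp (phaseS k th0 L x y t)" using coeff_pos[OF L] by simp
  next
    fix L' assume "L' \<in> idx_sets M N"
    then show "0 \<le> coeff A k L' * sum k L' ^ 0 * exp (phaseS k th0 L' x y t)"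
      using coeff_nonneg by simp
  qed
qed

lemma kp_u_tn: "kp_u A k th0 x y t = 2 * ((tn 2 x y * tn 0 x y - tn 1 x y * tn 1 x y) / (tn 0 x y * tn 0 x y))"
proof -
  have d1: "deriv (\<lambda>x''. ln (tau A k th0 x'' y t)) = (\<lambda>x'. tn 1 x' y / tn 0 x' y)"
  proof (rule ext)
    fix x'
    have "((\<lambda>x. ln (tn 0 x y)) has_real_derivative (1 / tn 0 x' y * tn 1 x' y)) (at x')"
      using DERIV_chain2[OF DERIV_ln_divide[OF tn0_pos[of x' y]] tn_deriv[of 0 y x']] by simp
    then have "deriv (\<lambda>x. ln (tn 0 x y)) x' = tn 1 x' y / tn 0 x' y"
      by (simp add: DERIV_imp_deriv)
    then show "deriv (\<lambda>x''. ln (tau A k th0 x'' y t)) x' = tn 1 x' y / tn 0 x' y"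
      by (simp add: tau_tn)
  qed
  have "((\<lambda>x. tn 1 x y / tn 0 x y) has_real_derivative
          ((tn 2 x y * tn 0 x y - tn 1 x y * tn 1 x y) / (tn 0 x y * tn 0 x y))) (at x)"
  proof -
    have e2: "\<And>x. tn (Suc 1) x y = tn 2 x y" by (simp add: numeral_2_eq_2)
    have e1: "\<And>x. tn (Suc 0) x y = tn 1 x y" by simp
    have "tn 0 x y \<noteq> 0" using tn0_pos[of x y] by simp
    from DERIV_divide[OF tn_deriv[of 1 y x] tn_deriv[of 0 y x] this]
    show ?thesis unfolding e1 e2 .
  qed
  then have "deriv (\<lambda>x. tn 1 x y / tn 0 x y) x = (tn 2 x y * tn 0 x y - tn 1 x y * tn 1 x y) / (tn 0 x y * tn 0 x y)"
    by (rule DERIV_imp_deriv)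
  then show ?thesis unfolding kp_u_def d1 by simp
qed

end

locale kp2 = kpctx +
  fixes \<sigma> :: real and F :: "real filter" and K :: "nat set" and i j :: nat
  assumes Flim: "filterlim (\<lambda>y. \<sigma> * y) at_top F" and sig: "\<sigma> * \<sigma> = 1"
    and iM: "i < M" and jM: "j < M" and ij: "i \<noteq> j" and iK: "i \<notin> K" and jK: "j \<notin> K"
    and IS: "insert i K \<in> idx_sets M N"
    and freq: "\<exists>\<^sub>F y in F. \<exists>x. dominant A k th0 x y t = {insert i K, insert j K}"
begin

abbreviation "II \<equiv> insert i K"
abbreviation "JJ \<equiv> insert j K"

lemma kij: "k i \<noteq> k j" using k_ne iM jM ij by blast

lemma fK: "finite K"
proof -
  have "II \<subseteq> {..<M}" using IS unfolding idx_sets_def by simp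
  then have "finite II" by (rule finite_subset) simp
  then show ?thesis by simp
qed

lemma IJ_ne: "II \<noteq> JJ" using ij iK jK by blast

lemma sumI: "sum f II = f i + sum f K" using fK iK by simp
lemma sumJ: "sum f JJ = f j + sum f K" using fK jK by simp

lemma IJ_Bs: "II \<in> Bs" "JJ \<in> Bs"
proof -
  obtain y x where D: "dominant A k th0 x y t = {II, JJ}" using frequently_ex[OF freq] by blast
  have "II \<in> dominant A k th0 x y t" "JJ \<in> dominant A k th0 x y t" using D by simp_all
  then have "gismax Bs (\<lambda>m. phase k th0 m x y t) II" "gismax Bs (\<lambda>m. phase k th0 m x y t) JJ"
    unfolding dominant_eq by simp_all
  then show "II \<in> Bs" "JJ \<in> Bs" unfolding gismax_def by blast+
qed

definition gg :: "nat \<Rightarrow> real" where "gg m = (k m)^2 - (k i + k j) * k m"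
definition es :: "real \<Rightarrow> nat \<Rightarrow> real" where
  "es s m = k m * (s - ((k i)^3 - (k j)^3) * t - th0 i + th0 j) / (k i - k j) + k m ^ 3 * t + th0 m"
definition W :: "nat \<Rightarrow> real" where "W m = \<sigma> * gg m"

lemma gg_ij: "gg i = gg j" unfolding gg_def by (simp add: algebra_simps power2_eq_square)

lemma line_phase: "phase k th0 m (line_x k th0 i j s y t) y t = y * gg m + es s m"
proof -
  have "k i - k j \<noteq> 0" using kij by simp
  then show ?thesis unfolding phase_def line_x_def gg_def es_def
    by (simp add: field_simps power2_eq_square power3_eq_cube)
qed

lemma line_phaseS: "phaseS k th0 L (line_x k th0 i j s y t) y t = y * sum gg L + sum (es s) L"
  unfolding phaseS_def line_phase by (simp add: sum.distrib sum_distrib_left)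

lemma line_x0: "line_x k th0 i j 0 y t = - (k i + k j) * y - Dp i j"
proof -
  have "k i - k j \<noteq> 0" using kij by simp
  then show ?thesis unfolding line_x_def Dp_def Cc_def
    by (simp add: field_simps power2_eq_square)
qed

lemma dom_props:
  assumes D: "dominant A k th0 x y t = {II, JJ}" and L: "L \<in> Bs"
  shows "x = line_x k th0 i j 0 y t" "phaseS k th0 L x y t \<le> phaseS k th0 II x y t"
proof -
  let ?w = "\<lambda>m. phase k th0 m x y t"
  have "II \<in> dominant A k th0 x y t" "JJ \<in> dominant A k th0 x y t" using D by simp_all
  then have mI: "gismax Bs ?w II" and mJ: "gismax Bs ?w JJ" unfolding dominant_eq by simp_all
  show "phaseS k th0 L x y t \<le> phaseS k th0 II x y t" using mI L unfolding gismax_def phaseS_def by blast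
  have "sum ?w JJ \<le> sum ?w II" "sum ?w II \<le> sum ?w JJ" using mI mJ IJ_Bs unfolding gismax_def by blast+
  then have "?w i = ?w j" unfolding sumI sumJ by simp
  then have "x = - (k i + k j) * y - Dp i j" by (rule tie_line[OF kij])
  then show "x = line_x k th0 i j 0 y t" using line_x0 by simp
qed

lemma sumW: "sum W L = \<sigma> * sum gg L" unfolding W_def by (simp add: sum_distrib_left)

lemma W_max: assumes L: "L \<in> Bs" shows "sum W L \<le> sum W II"
proof (rule ccontr)
  assume "\<not> sum W L \<le> sum W II"
  then have dpos: "sum W L - sum W II > 0" by simp
  define d where "d = sum W L - sum W II"
  define c0 where "c0 = sum (es 0) L - sum (es 0) II"
  have ev: "\<forall>\<^sub>F y in F. - c0 / d < \<sigma> * y" using Flim unfolding filterlim_at_top_dense by blast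
  obtain y where y: "- c0 / d < \<sigma> * y" "\<exists>x. dominant A k th0 x y t = {II, JJ}"
    using frequently_ex[OF frequently_eventually_conj[OF freq ev]] by blast
  then obtain x where D: "dominant A k th0 x y t = {II, JJ}" by blast
  have x: "x = line_x k th0 i j 0 y t" and le: "phaseS k th0 L x y t \<le> phaseS k th0 II x y t"
    using dom_props[OF D L] by auto
  have "phaseS k th0 L x y t - phaseS k th0 II x y t = y * (sum gg L - sum gg II) + c0"
    unfolding x line_phaseS c0_def by (simp add: algebra_simps)
  also have "y * (sum gg L - sum gg II) = (\<sigma> * y) * d"
  proof -
    have "y * (sum gg L - sum gg II) = (\<sigma> * \<sigma>) * y * (sum gg L - sum gg II)" using sig by simp
    also have "\<dots> = (\<sigma> * y) * d" unfolding d_def sumW by (simp add: algebra_simps)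
    finally show ?thesis .
  qed
  finally have e: "phaseS k th0 L x y t - phaseS k th0 II x y t = (\<sigma> * y) * d + c0" .
  have d0: "0 < d" using dpos unfolding d_def .
  have "- c0 / d < \<sigma> * y" using y(1) .
  then have "- c0 < (\<sigma> * y) * d" using pos_divide_less_eq[OF d0] by blast
  then show False using e le by simp
qed

lemma W_tie: assumes "a < M" "b < M" "a \<noteq> b" "W a = W b" shows "{a,b} = {i,j}"
proof -
  have "\<sigma> \<noteq> 0" using sig by auto
  then have "gg a = gg b" using assms(4) unfolding W_def by simp
  then have "(k a - k b) * (k a + k b - k i - k j) = 0" unfolding gg_def
    by (simp add: algebra_simps power2_eq_square)
  moreover have "k a \<noteq> k b" using k_ne assms by blast
  ultimately have s: "k a + k b = k i + k j" by simp
  define a' where "a' = min a b"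
  define b' where "b' = max a b"
  define i' where "i' = min i j"
  define j' where "j' = max i j"
  have 1: "k a' + k b' = k a + k b" unfolding a'_def b'_def by (auto simp: min_def max_def)
  have 2: "k i' + k j' = k i + k j" unfolding i'_def j'_def by (auto simp: min_def max_def)
  have lt: "a' < b'" "i' < j'" unfolding a'_def b'_def i'_def j'_def using assms ij by auto
  have ltM: "a' < M" "b' < M" "i' < M" "j' < M" unfolding a'_def b'_def i'_def j'_def using assms iM jM by auto
  have "(a', b') = (i', j')"
  proof (rule ccontr)
    assume "(a', b') \<noteq> (i', j')"
    from k_generic[OF ltM lt this] show False using 1 2 s by simp
  qed
  then have "{a',b'} = {i',j'}" by simp
  moreover have "{a,b} = {a',b'}" unfolding a'_def b'_def by (auto simp: min_def max_def)
  moreover have "{i,j} = {i',j'}" unfolding i'_def j'_def by (auto simp: min_def max_def)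
  ultimately show ?thesis by simp
qed

lemma W_tiefree: "tiefree W"
  unfolding tiefree_def
proof (intro allI impI)
  fix a b c d assume h: "a \<in> {..<M}" "b \<in> {..<M}" "c \<in> {..<M}" "d \<in> {..<M}" "a \<noteq> b" "c \<noteq> d" "W a = W b" "W c = W d"
  have "{a,b} = {i,j}" using W_tie h by simp
  moreover have "{c,d} = {i,j}" using W_tie h by simp
  ultimately show "{a,b} = {c,d}" by simp
qed

lemma W_strict: assumes L: "L \<in> Bs" "L \<noteq> II" "L \<noteq> JJ" shows "sum W L < sum W II"
proof (rule ccontr)
  assume "\<not> sum W L < sum W II"
  then have eq: "sum W L = sum W II" using W_max[OF L(1)] by simp
  interpret exfam Bs "{..<M}" W using exfam_Bs[OF W_tiefree] .
  have mI: "ismax II" unfolding gismax_def using IJ_Bs W_max by blast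
  have "sum W JJ = sum W II" unfolding sumI sumJ W_def using gg_ij by simp
  then have mJ: "ismax JJ" unfolding gismax_def using IJ_Bs W_max by simp
  have mL: "ismax L" unfolding gismax_def using L W_max eq by simp
  from third_max[OF mI mJ IJ_ne mL] L show False by simp
qed

end

context kp2 begin

definition Xs :: "real \<Rightarrow> real \<Rightarrow> real" where "Xs s y = line_x k th0 i j s y t"
definition Zs :: "real \<Rightarrow> real" where
  "Zs s = coeff A k II * exp (sum (es s) II) + coeff A k JJ * exp (sum (es s) JJ)"
definition Den :: "real \<Rightarrow> real \<Rightarrow> real" where
  "Den s y = coeff A k II * exp (phaseS k th0 II (Xs s y) y t) + coeff A k JJ * exp (phaseS k th0 JJ (Xs s y) y t)"

lemma GJ: "sum gg JJ = sum gg II" unfolding sumI sumJ using gg_ij by simp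

lemma Z_pos: "Zs s > 0"
  unfolding Zs_def using coeff_pos[OF IJ_Bs(1)] coeff_pos[OF IJ_Bs(2)] by (simp add: add_pos_pos)

lemma exp_split: "exp (y * a + e) = exp (y * (a - b)) * exp e * exp (y * (b::real))"
proof -
  have "exp (y * (a - b)) * exp e * exp (y * b) = exp (y * (a - b) + e + y * b)" by (simp add: exp_add)
  also have "y * (a - b) + e + y * b = y * a + e" by (simp add: algebra_simps)
  finally show ?thesis by simp
qed

lemma Den_eq: "Den s y = exp (y * sum gg II) * Zs s"
  unfolding Den_def Zs_def Xs_def line_phaseS GJ by (simp add: exp_add algebra_simps)

lemma Den_pos: "Den s y > 0" unfolding Den_eq using Z_pos by simp

lemma term_eq:
  "coeff A k L * c * exp (phaseS k th0 L (Xs s y) y t) / Den s y =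
   (coeff A k L * c * exp (sum (es s) L) / Zs s) * exp (y * (sum gg L - sum gg II))"
proof -
  have Z: "Zs s \<noteq> 0" using Z_pos[of s] by simp
  have "exp (phaseS k th0 L (Xs s y) y t) = exp (y * (sum gg L - sum gg II)) * exp (sum (es s) L) * exp (y * sum gg II)"
    unfolding Xs_def line_phaseS by (rule exp_split)
  then show ?thesis unfolding Den_eq using Z by (simp add: field_simps)
qed

lemma exp_lim:
  assumes L: "L \<in> Bs" "L \<noteq> II" "L \<noteq> JJ"
  shows "((\<lambda>y. exp (y * (sum gg L - sum gg II))) \<longlongrightarrow> 0) F"
proof -
  have neg: "\<sigma> * (sum gg L - sum gg II) < 0"
    using W_strict[OF L] unfolding sumW by (simp add: algebra_simps)
  have "filterlim (\<lambda>y. (\<sigma> * (sum gg L - sum gg II)) * (\<sigma> * y)) at_bot F"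
    by (rule filterlim_tendsto_neg_mult_at_bot[OF tendsto_const neg Flim])
  moreover have "(\<lambda>y. (\<sigma> * (sum gg L - sum gg II)) * (\<sigma> * y)) = (\<lambda>y. y * (sum gg L - sum gg II))"
  proof (rule ext)
    fix y
    have "(\<sigma> * (sum gg L - sum gg II)) * (\<sigma> * y) = (\<sigma> * \<sigma>) * (y * (sum gg L - sum gg II))"
      by (simp add: algebra_simps)
    then show "(\<sigma> * (sum gg L - sum gg II)) * (\<sigma> * y) = y * (sum gg L - sum gg II)" using sig by simp
  qed
  ultimately have "filterlim (\<lambda>y. y * (sum gg L - sum gg II)) at_bot F" by simp
  from filterlim_compose[OF exp_at_bot this] show ?thesis .
qed

lemma term_lim:
  assumes L: "L \<in> idx_sets M N"
  shows "((\<lambda>y. coeff A k L * c * exp (phaseS k th0 L (Xs s y) y t) / Den s y) \<longlongrightarrow>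
           (if L \<in> {II, JJ} then coeff A k L * c * exp (sum (es s) L) / Zs s else 0)) F"
proof -
  let ?a = "coeff A k L * c * exp (sum (es s) L) / Zs s"
  have "((\<lambda>y. ?a * exp (y * (sum gg L - sum gg II))) \<longlongrightarrow> (if L \<in> {II, JJ} then ?a else 0)) F"
  proof (cases "L \<in> {II, JJ}")
    case True
    then have "sum gg L = sum gg II" using GJ by auto
    then show ?thesis using True by simp
  next
    case False
    show ?thesis
    proof (cases "coeff A k L = 0")
      case True then show ?thesis using False by simp
    next
      case c: False
      then have "L \<in> Bs" using coeff_ne_iff[OF L] by simp
      then have "((\<lambda>y. exp (y * (sum gg L - sum gg II))) \<longlongrightarrow> 0) F" using exp_lim False by simp
      then have "((\<lambda>y. ?a * exp (y * (sum gg L - sum gg II))) \<longlongrightarrow> ?a * 0) F" by (rule tendsto_mult_left)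
      then show ?thesis using False by simp
    qed
  qed
  then show ?thesis unfolding term_eq .
qed

definition Pl :: "real \<Rightarrow> nat \<Rightarrow> real" where
  "Pl s n = coeff A k II * sum k II ^ n * exp (sum (es s) II) / Zs s + coeff A k JJ * sum k JJ ^ n * exp (sum (es s) JJ) / Zs s"

lemma tn_lim: "((\<lambda>y. tn n (Xs s y) y / Den s y) \<longlongrightarrow> Pl s n) F"
proof -
  let ?f = "\<lambda>L. coeff A k L * sum k L ^ n * exp (sum (es s) L) / Zs s"
  have "((\<lambda>y. \<Sum>L\<in>idx_sets M N. coeff A k L * sum k L ^ n * exp (phaseS k th0 L (Xs s y) y t) / Den s y) \<longlongrightarrow>
        (\<Sum>L\<in>idx_sets M N. if L \<in> {II, JJ} then ?f L else 0)) F"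
    by (rule tendsto_sum) (rule term_lim)
  moreover have "(\<Sum>L\<in>idx_sets M N. if L \<in> {II, JJ} then ?f L else 0) = sum ?f (idx_sets M N \<inter> {II, JJ})"
    by (rule sum.inter_restrict[OF fin_S, symmetric])
  moreover have "idx_sets M N \<inter> {II, JJ} = {II, JJ}" using IJ_Bs unfolding Bs_def by auto
  moreover have "sum ?f {II, JJ} = Pl s n" unfolding Pl_def using IJ_ne by simp
  moreover have "\<And>y. tn n (Xs s y) y / Den s y = (\<Sum>L\<in>idx_sets M N. coeff A k L * sum k L ^ n * exp (phaseS k th0 L (Xs s y) y t) / Den s y)"
    unfolding tn_def by (simp add: sum_divide_distrib)
  ultimately show ?thesis by simp
qed

end

lemma cosh_sq_half: "(cosh (u / 2))^2 = (exp u + 2 + exp (- u)) / (4::real)"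
proof -
  have c: "cosh (u/2) = (exp (u/2) + exp (-(u/2))) / 2" by (simp add: cosh_def)
  have 1: "exp (u/2) * exp (u/2) = exp u" by (simp add: exp_add[symmetric])
  have 2: "exp (-(u/2)) * exp (-(u/2)) = exp (-u)" by (simp add: exp_add[symmetric])
  have 3: "exp (u/2) * exp (-(u/2)) = 1" by (simp add: exp_minus)
  show ?thesis unfolding c power2_eq_square
    by (simp add: field_simps 1 2 3 distrib_left distrib_right)
qed

lemma alg_final:
  fixes r1 r2 k1 k2 :: real
  assumes r1: "r1 > 0" and r2: "r2 > 0"
  defines "P \<equiv> \<lambda>n::nat. r1 * k1 ^ n / (r1 + r2) + r2 * k2 ^ n / (r1 + r2)"
  shows "2 * ((P 2 * P 0 - P 1 * P 1) / (P 0 * P 0)) = (1/2) * (k1 - k2)^2 / ((r1/r2 + 2 + r2/r1) / 4)"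
proof -
  have s: "r1 + r2 > 0" using r1 r2 by simp
  obtain D where D: "D = r1 + r2" by blast
  have Dp: "D \<noteq> 0" using s D by simp
  have Pn: "P n = (r1 * k1^n + r2 * k2^n) / D" for n unfolding P_def D by (simp add: add_divide_distrib)
  have P0: "P 0 = 1" unfolding Pn using Dp D by simp
  have num: "(r1*k1^2 + r2*k2^2)*(r1+r2) - (r1*k1 + r2*k2)^2 = r1*r2*(k1-k2)^2"
    by (simp add: power2_eq_square algebra_simps)
  have "P 2 - P 1 * P 1 = ((r1*k1^2 + r2*k2^2)*D - (r1*k1 + r2*k2)^2) / D^2"
    unfolding Pn using Dp by (simp add: field_simps power2_eq_square)
  also have "\<dots> = r1 * r2 * (k1 - k2)^2 / (r1 + r2)^2" unfolding D num ..
  finally have "P 2 - P 1 * P 1 = r1 * r2 * (k1 - k2)^2 / (r1 + r2)^2" .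
  then have L: "2 * ((P 2 * P 0 - P 1 * P 1) / (P 0 * P 0)) = 2 * r1 * r2 * (k1 - k2)^2 / (r1 + r2)^2"
    unfolding P0 by simp
  have "(r1/r2 + 2 + r2/r1) / 4 = (r1 + r2)^2 / (4 * r1 * r2)"
    using r1 r2 by (simp add: field_simps power2_eq_square)
  then have R: "(1/2) * (k1 - k2)^2 / ((r1/r2 + 2 + r2/r1) / 4) = 2 * r1 * r2 * (k1 - k2)^2 / (r1 + r2)^2"
    using r1 r2 s by (simp add: field_simps)
  show ?thesis using L R by simp
qed

context kp2 begin

lemma ES_diff: "sum (es s) II = sum (es s) JJ + s"
proof -
  have nz: "k i - k j \<noteq> 0" using kij by simp
  define Q where "Q = s - ((k i)^3 - (k j)^3) * t - th0 i + th0 j"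
  have "es s i - es s j = (k i * Q - k j * Q) / (k i - k j) + (((k i)^3 - (k j)^3) * t + th0 i - th0 j)"
    unfolding es_def Q_def[symmetric] by (simp add: diff_divide_distrib algebra_simps)
  also have "(k i * Q - k j * Q) / (k i - k j) = Q" using nz by (simp add: left_diff_distrib[symmetric])
  finally have "es s i - es s j = s" unfolding Q_def by simp
  then show ?thesis unfolding sumI sumJ by simp
qed

lemma part2_s:
  "((\<lambda>y. tau A k th0 (line_x k th0 i j s y t) y t /
         (coeff A k II * exp (phaseS k th0 II (line_x k th0 i j s y t) y t)
          + coeff A k JJ * exp (phaseS k th0 JJ (line_x k th0 i j s y t) y t))) \<longlongrightarrow> 1) F
   \<and> ((\<lambda>y. kp_u A k th0 (line_x k th0 i j s y t) y t)
       \<longlongrightarrow> (1/2) * (k i - k j)^2 / (cosh ((1/2) * (s + ln (coeff A k II / coeff A k JJ))))^2) F"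
proof -
  define r1 where "r1 = coeff A k II * exp (sum (es s) II)"
  define r2 where "r2 = coeff A k JJ * exp (sum (es s) JJ)"
  have aI: "coeff A k II > 0" and aJ: "coeff A k JJ > 0" using coeff_pos IJ_Bs by auto
  have r1: "r1 > 0" and r2: "r2 > 0" unfolding r1_def r2_def using aI aJ by auto
  have Zr: "Zs s = r1 + r2" unfolding Zs_def r1_def r2_def by simp
  have Pl_eq: "Pl s n = r1 * sum k II ^ n / (r1 + r2) + r2 * sum k JJ ^ n / (r1 + r2)" for n
    unfolding Pl_def Zr by (simp add: r1_def r2_def ac_simps)
  have P0: "Pl s 0 = 1" unfolding Pl_eq using r1 r2 by (simp add: add_divide_distrib[symmetric])
  have tau_den: "tau A k th0 (line_x k th0 i j s y t) y t /
         (coeff A k II * exp (phaseS k th0 II (line_x k th0 i j s y t) y t)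
          + coeff A k JJ * exp (phaseS k th0 JJ (line_x k th0 i j s y t) y t)) = tn 0 (Xs s y) y / Den s y" for y
    unfolding tau_tn Den_def Xs_def ..
  have lim1: "((\<lambda>y. tau A k th0 (line_x k th0 i j s y t) y t /
         (coeff A k II * exp (phaseS k th0 II (line_x k th0 i j s y t) y t)
          + coeff A k JJ * exp (phaseS k th0 JJ (line_x k th0 i j s y t) y t))) \<longlongrightarrow> 1) F"
    unfolding tau_den using tn_lim[of 0 s] P0 by simp
  have ku: "kp_u A k th0 (line_x k th0 i j s y t) y t =
      2 * (((tn 2 (Xs s y) y / Den s y) * (tn 0 (Xs s y) y / Den s y) - (tn 1 (Xs s y) y / Den s y) * (tn 1 (Xs s y) y / Den s y))
       / ((tn 0 (Xs s y) y / Den s y) * (tn 0 (Xs s y) y / Den s y)))" for y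
  proof -
    have D: "Den s y \<noteq> 0" using Den_pos[of s y] by simp
    have T: "tn 0 (Xs s y) y \<noteq> 0" using tn0_pos[of "Xs s y" y] by simp
    show ?thesis unfolding kp_u_tn Xs_def[symmetric] using D T by (simp add: field_simps)
  qed
  have "((\<lambda>y. 2 * (((tn 2 (Xs s y) y / Den s y) * (tn 0 (Xs s y) y / Den s y) - (tn 1 (Xs s y) y / Den s y) * (tn 1 (Xs s y) y / Den s y))
       / ((tn 0 (Xs s y) y / Den s y) * (tn 0 (Xs s y) y / Den s y)))) \<longlongrightarrow>
        2 * ((Pl s 2 * Pl s 0 - Pl s 1 * Pl s 1) / (Pl s 0 * Pl s 0))) F"
    by (intro tendsto_intros tn_lim) (simp add: P0)
  moreover have "2 * ((Pl s 2 * Pl s 0 - Pl s 1 * Pl s 1) / (Pl s 0 * Pl s 0)) =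
      (1/2) * (k i - k j)^2 / (cosh ((1/2) * (s + ln (coeff A k II / coeff A k JJ))))^2"
  proof -
    have kk: "sum k II - sum k JJ = k i - k j" unfolding sumI sumJ by simp
    have A: "2 * ((Pl s 2 * Pl s 0 - Pl s 1 * Pl s 1) / (Pl s 0 * Pl s 0)) =
        (1/2) * (sum k II - sum k JJ)^2 / ((r1/r2 + 2 + r2/r1) / 4)"
      unfolding Pl_eq by (rule alg_final[OF r1 r2])
    define u where "u = s + ln (coeff A k II / coeff A k JJ)"
    have eu: "exp u = r1 / r2"
    proof -
      have "exp u = exp s * (coeff A k II / coeff A k JJ)" unfolding u_def using aI aJ by (simp add: exp_add)
      also have "\<dots> = r1 / r2" unfolding r1_def r2_def ES_diff using aI aJ by (simp add: exp_add field_simps)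
      finally show ?thesis .
    qed
    have emu: "exp (- u) = r2 / r1" using eu by (simp add: exp_minus)
    have C0: "(cosh (u/2))^2 = (r1/r2 + 2 + r2/r1) / 4"
      using cosh_sq_half[of u] eu emu by simp
    have h: "(1/2) * (s + ln (coeff A k II / coeff A k JJ)) = u/2" unfolding u_def by simp
    show ?thesis unfolding h C0 using A[unfolded kk] .
  qed
  ultimately have lim2: "((\<lambda>y. kp_u A k th0 (line_x k th0 i j s y t) y t)
       \<longlongrightarrow> (1/2) * (k i - k j)^2 / (cosh ((1/2) * (s + ln (coeff A k II / coeff A k JJ))))^2) F"
    unfolding ku by simp
  show ?thesis using lim1 lim2 by blast
qed

end

lemma disp: fixes a b :: real shows
  "(let lx = a - b; ly = a^2 - b^2; \<omega> = a^3 - b^3 in -4 * \<omega> * lx + lx^4 + 3 * ly^2 = 0)"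
  unfolding Let_def by (simp add: eval_nat_numeral algebra_simps)

context kpctx begin

lemma mainF:
  assumes Flim: "filterlim (\<lambda>y. \<sigma> * y) at_top F" and sig: "\<sigma> * \<sigma> = 1"
  shows "(\<forall>\<^sub>F y in F. \<forall>x.
          card (dominant A k th0 x y t) = 1 \<or>
          (\<exists>K i j. i \<noteq> j \<and> i \<notin> K \<and> j \<notin> K \<and>
             dominant A k th0 x y t = {insert i K, insert j K} \<and>
             phase k th0 i x y t = phase k th0 j x y t))
       \<and>
       (\<forall>K i j. i < M \<and> j < M \<and> i \<noteq> j \<and> i \<notin> K \<and> j \<notin> K \<and> insert i K \<in> idx_sets M N \<and>
          (\<exists>\<^sub>F y in F. \<exists>x. dominant A k th0 x y t = {insert i K, insert j K}) \<longrightarrow>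
          (\<forall>s.
             ((\<lambda>y. tau A k th0 (line_x k th0 i j s y t) y t /
                   (coeff A k (insert i K) * exp (phaseS k th0 (insert i K) (line_x k th0 i j s y t) y t)
                    + coeff A k (insert j K) * exp (phaseS k th0 (insert j K) (line_x k th0 i j s y t) y t)))
               \<longlongrightarrow> 1) F
           \<and> ((\<lambda>y. kp_u A k th0 (line_x k th0 i j s y t) y t)
               \<longlongrightarrow> (1/2) * (k i - k j)^2 /
                   (cosh ((1/2) * (s + ln (coeff A k (insert i K) / coeff A k (insert j K)))))^2) F)
          \<and> (let lx = k i - k j; ly = (k i)^2 - (k j)^2; \<omega> = (k i)^3 - (k j)^3
             in -4 * \<omega> * lx + lx^4 + 3 * ly^2 = 0))"
proof (intro conjI allI impI)
  show "\<forall>\<^sub>F y in F. \<forall>x.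
          card (dominant A k th0 x y t) = 1 \<or>
          (\<exists>K i j. i \<noteq> j \<and> i \<notin> K \<and> j \<notin> K \<and>
             dominant A k th0 x y t = {insert i K, insert j K} \<and>
             phase k th0 i x y t = phase k th0 j x y t)"
    using ev_tiefree[OF Flim] by eventually_elim (use part1_at in blast)
next
  fix K i j
  assume h: "i < M \<and> j < M \<and> i \<noteq> j \<and> i \<notin> K \<and> j \<notin> K \<and> insert i K \<in> idx_sets M N \<and>
          (\<exists>\<^sub>F y in F. \<exists>x. dominant A k th0 x y t = {insert i K, insert j K})"
  show "let lx = k i - k j; ly = (k i)^2 - (k j)^2; \<omega> = (k i)^3 - (k j)^3
             in -4 * \<omega> * lx + lx^4 + 3 * ly^2 = 0" by (rule disp)
  fix s
  have ax: "kp2_axioms N M k th0 A t \<sigma> F K i j"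
    by (rule kp2_axioms.intro) (use Flim sig h in auto)
  interpret kp2 N M k th0 A t \<sigma> F K i j
    by (rule kp2.intro[OF kpctx_axioms ax])
  show "((\<lambda>y. tau A k th0 (line_x k th0 i j s y t) y t /
                   (coeff A k (insert i K) * exp (phaseS k th0 (insert i K) (line_x k th0 i j s y t) y t)
                    + coeff A k (insert j K) * exp (phaseS k th0 (insert j K) (line_x k th0 i j s y t) y t)))
               \<longlongrightarrow> 1) F"
    using part2_s[of s] by blast
  show "((\<lambda>y. kp_u A k th0 (line_x k th0 i j s y t) y t)
               \<longlongrightarrow> (1/2) * (k i - k j)^2 /
                   (cosh ((1/2) * (s + ln (coeff A k (insert i K) / coeff A k (insert j K)))))^2) F"
    using part2_s[of s] by blast
qed

end

theorem proposition1:
  fixes N M :: nat and k th0 :: "nat \<Rightarrow> real" and A :: "real mat" and t :: real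
  assumes N1: "N \<ge> 1" and MN: "M > N"
    and k_incr: "\<And>a b. a < b \<Longrightarrow> b < M \<Longrightarrow> k a < k b"
    and k_generic: "\<And>a b c d. a < M \<Longrightarrow> b < M \<Longrightarrow> c < M \<Longrightarrow> d < M \<Longrightarrow> a < b \<Longrightarrow> c < d
                      \<Longrightarrow> (a, b) \<noteq> (c, d) \<Longrightarrow> k a + k b \<noteq> k c + k d"
    and A_dim: "A \<in> carrier_mat N M"
    and A_rank: "vec_space.rank N A = N"
    and A_pos: "\<And>I. I \<in> idx_sets M N \<Longrightarrow> col_minor A I \<noteq> 0 \<Longrightarrow> col_minor A I > 0"
  shows
    "\<forall>F \<in> {at_top, at_bot}.
       (\<forall>\<^sub>F y in F. \<forall>x.
          card (dominant A k th0 x y t) = 1 \<or>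
          (\<exists>K i j. i \<noteq> j \<and> i \<notin> K \<and> j \<notin> K \<and>
             dominant A k th0 x y t = {insert i K, insert j K} \<and>
             phase k th0 i x y t = phase k th0 j x y t))
       \<and>
       (\<forall>K i j. i < M \<and> j < M \<and> i \<noteq> j \<and> i \<notin> K \<and> j \<notin> K \<and> insert i K \<in> idx_sets M N \<and>
          (\<exists>\<^sub>F y in F. \<exists>x. dominant A k th0 x y t = {insert i K, insert j K}) \<longrightarrow>
          (\<forall>s.
             ((\<lambda>y. tau A k th0 (line_x k th0 i j s y t) y t /
                   (coeff A k (insert i K) * exp (phaseS k th0 (insert i K) (line_x k th0 i j s y t) y t)
                    + coeff A k (insert j K) * exp (phaseS k th0 (insert j K) (line_x k th0 i j s y t) y t)))
               \<longlongrightarrow> 1) F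
           \<and> ((\<lambda>y. kp_u A k th0 (line_x k th0 i j s y t) y t)
               \<longlongrightarrow> (1/2) * (k i - k j)^2 /
                   (cosh ((1/2) * (s + ln (coeff A k (insert i K) / coeff A k (insert j K)))))^2) F)
          \<and> (let lx = k i - k j; ly = (k i)^2 - (k j)^2; \<omega> = (k i)^3 - (k j)^3
             in -4 * \<omega> * lx + lx^4 + 3 * ly^2 = 0))"
proof -
  have ax: "kpctx N M k A"
    by (rule kpctx.intro) (use N1 MN k_incr k_generic A_dim A_rank A_pos in auto)
  interpret kpctx N M k th0 A t by (rule ax)
  show ?thesis
  proof (intro ballI)
    fix F :: "real filter" assume "F \<in> {at_top, at_bot}"
    then consider "F = at_top" | "F = at_bot" by blast
    then show "(\<forall>\<^sub>F y in F. \<forall>x.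
          card (dominant A k th0 x y t) = 1 \<or>
          (\<exists>K i j. i \<noteq> j \<and> i \<notin> K \<and> j \<notin> K \<and>
             dominant A k th0 x y t = {insert i K, insert j K} \<and>
             phase k th0 i x y t = phase k th0 j x y t))
       \<and>
       (\<forall>K i j. i < M \<and> j < M \<and> i \<noteq> j \<and> i \<notin> K \<and> j \<notin> K \<and> insert i K \<in> idx_sets M N \<and>
          (\<exists>\<^sub>F y in F. \<exists>x. dominant A k th0 x y t = {insert i K, insert j K}) \<longrightarrow>
          (\<forall>s.
             ((\<lambda>y. tau A k th0 (line_x k th0 i j s y t) y t /
                   (coeff A k (insert i K) * exp (phaseS k th0 (insert i K) (line_x k th0 i j s y t) y t)
                    + coeff A k (insert j K) * exp (phaseS k th0 (insert j K) (line_x k th0 i j s y t) y t)))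
               \<longlongrightarrow> 1) F
           \<and> ((\<lambda>y. kp_u A k th0 (line_x k th0 i j s y t) y t)
               \<longlongrightarrow> (1/2) * (k i - k j)^2 /
                   (cosh ((1/2) * (s + ln (coeff A k (insert i K) / coeff A k (insert j K)))))^2) F)
          \<and> (let lx = k i - k j; ly = (k i)^2 - (k j)^2; \<omega> = (k i)^3 - (k j)^3
             in -4 * \<omega> * lx + lx^4 + 3 * ly^2 = 0))"
    proof cases
      case 1
      have Fl: "filterlim (\<lambda>y. (1::real) * y) at_top F" using 1 by (simp add: filterlim_ident)
      show ?thesis by (rule mainF[OF Fl]) simp
    next
      case 2
      have Fl: "filterlim (\<lambda>y. (-1::real) * y) at_top F" using 2 filterlim_uminus_at_top_at_bot by simp
      show ?thesis by (rule mainF[OF Fl]) simp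
    qed
  qed
qed

end
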